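(* Let $L$ be a relational language and $<\,\notin L$ a binary relation symbol. Let $\mathcal{S} = (S,L^S,<^S)$ be an enumerated $L$-structure such that $(S,L^S)$ is a Fraïssé limit which has finite big Ramsey degrees, whose age has the strong amalgamation property, and which has natural 1-point extensions. Then for every $\mathcal{A}\in\mathrm{Fin}(\mathcal{S})$ there is $n\in\mathbb{N}$ such that for every $k\in\mathbb{N}$ and every family of colorings $\gamma_\mathcal{B} : \binom{\mathcal{B}}{\mathcal{A}}\to k$ indexed by $\mathcal{B}\in\mathrm{Fin}(\mathcal{S})$, there are a substructure $\mathcal{S}'$ of $\mathcal{S}$ isomorphic to $\mathcal{S}$ and a choice function $c$ assigning to each $\mathcal{E}\in\binom{\mathcal{S}'}{\mathcal{A}}$ some $c(\mathcal{E})\in\mathrm{Fin}(\mathcal{S})$ with $\mathcal{E}\le c(\mathcal{E})$, such that $$\Big|\Big\{\gamma_{c(\mathcal{E})}(\mathcal{E}) : \mathcal{E}\in\binom{\mathcal{S}'}{\mathcal{A}}\Big\}\Big|\le n.$$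
   Context: For $L$-structures, an embedding is an injective map preserving and reflecting all relations; $\mathrm{Emb}(\mathcal{A},\mathcal{B})$ is the set of embeddings. $\mathcal{A}\le\mathcal{B}$ means $\mathcal{A}$ is an induced substructure of $\mathcal{B}$; $\mathcal{S}[A]$ is the substructure induced on $A$. $\mathrm{Fin}(\mathcal{S})=\{\mathcal{S}[A]:\varnothing\ne A\subseteq S, A\text{ finite}\}$, and $\binom{\mathcal{B}}{\mathcal{A}}=\{\mathcal{E}:\mathcal{E}\cong\mathcal{A},\ \mathcal{E}\le\mathcal{B}\}$ (all as $(L\cup\{<\})$-structures). An enumerated $L$-structure is an $(L\cup\{<\})$-structure $(S,L^S,<^S)$ with $(S,<^S)$ of order type $\omega$. A Fraïssé limit is a countably infinite ultrahomogeneous structure; its age (finite structures embeddable into it) has strong amalgamation if any two embeddings $f:\mathcal{A}\hookrightarrow\mathcal{B}$, $g:\mathcal{A}\hookrightarrow\mathcal{C}$ in the age can be completed by embeddings $f':\mathcal{B}\hookrightarrow\mathcal{D}$, $g':\mathcal{C}\hookrightarrow\mathcal{D}$ into some $\mathcal{D}$ in the age with $f'\circ f=g'\circ g$ and $f'(B)\cap g'(C)=f'(f(A))$. $\mathcal{F}$ has finite big Ramsey degrees if for every finite $\mathcal{A}$ in its age there is $n$ such that every coloring $\chi:\mathrm{Emb}(\mathcal{A},\mathcal{F})\to k$ ($k\in\mathbb{N}$) admits $w\in\mathrm{Emb}(\mathcal{F},\mathcal{F})$ with $|\chi(w\circ\mathrm{Emb}(\mathcal{A},\mathcal{F}))|\le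 n$. $\mathcal{F}$ has natural 1-point extensions if there is a functor $J:\mathrm{Fin}(\mathcal{F})\to\mathrm{Fin}(\mathcal{F})$ (morphisms: embeddings) such that for each $\mathcal{A}=(A,L^A)$ with $J(\mathcal{A})=(A',L^{A'})$, $\mathcal{A}\le J(\mathcal{A})$ and $|A'\setminus A|=1$, and for each embedding $f:\mathcal{A}\hookrightarrow\mathcal{B}$, $J(f)$ extends $f$ and maps the point of $A'\setminus A$ to the point of $B'\setminus B$. *)

theory Defs
  imports Main "HOL-Library.FuncSet" "HOL-Library.Countable_Set"
begin

text \<open>A relational language: symbols of type 'l with arities ar. An L-structure on a
carrier set X of type 'a interprets each symbol l by R l, a predicate on tuples
(lists) of length ar l. Only tuples of the right length with entries in the carrier matter.\<close>

definition emb :: "('l \<Rightarrow> nat) \<Rightarrow> ('l \<Rightarrow> 'a list \<Rightarrow> bool) \<Rightarrow> 'a set \<Rightarrow> 'a set \<Rightarrow> ('a \<Rightarrow> 'a) \<Rightarrow> bool" where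
  "emb ar R X Y f \<longleftrightarrow> inj_on f X \<and> f ` X \<subseteq> Y \<and>
     (\<forall>l xs. length xs = ar l \<and> set xs \<subseteq> X \<longrightarrow> (R l (map f xs) \<longleftrightarrow> R l xs))"

definition Emb :: "('l \<Rightarrow> nat) \<Rightarrow> ('l \<Rightarrow> 'a list \<Rightarrow> bool) \<Rightarrow> 'a set \<Rightarrow> 'a set \<Rightarrow> ('a \<Rightarrow> 'a) set" where
  "Emb ar R X Y = {f. emb ar R X Y f \<and> f \<in> extensional X}"

definition iso_L :: "('l \<Rightarrow> nat) \<Rightarrow> ('l \<Rightarrow> 'a list \<Rightarrow> bool) \<Rightarrow> 'a set \<Rightarrow> 'a set \<Rightarrow> ('a \<Rightarrow> 'a) \<Rightarrow> bool" where
  "iso_L ar R X Y h \<longleftrightarrow> bij_betw h X Y \<and> emb ar R X Y h"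

definition oemb :: "('l \<Rightarrow> nat) \<Rightarrow> ('l \<Rightarrow> 'a list \<Rightarrow> bool) \<Rightarrow> ('a \<Rightarrow> 'a \<Rightarrow> bool) \<Rightarrow> 'a set \<Rightarrow> 'a set \<Rightarrow> ('a \<Rightarrow> 'a) \<Rightarrow> bool" where
  "oemb ar R lt X Y f \<longleftrightarrow> emb ar R X Y f \<and> (\<forall>x\<in>X. \<forall>y\<in>X. lt (f x) (f y) \<longleftrightarrow> lt x y)"

definition oiso :: "('l \<Rightarrow> nat) \<Rightarrow> ('l \<Rightarrow> 'a list \<Rightarrow> bool) \<Rightarrow> ('a \<Rightarrow> 'a \<Rightarrow> bool) \<Rightarrow> 'a set \<Rightarrow> 'a set \<Rightarrow> bool" where
  "oiso ar R lt X Y \<longleftrightarrow> (\<exists>f. bij_betw f X Y \<and> oemb ar R lt X Y f)"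

text \<open>Fin(S): finite nonempty subsets (identified with the induced substructures).\<close>
definition Fin :: "'a set \<Rightarrow> 'a set set" where
  "Fin S = {A. A \<noteq> {} \<and> finite A \<and> A \<subseteq> S}"

definition binom :: "('l \<Rightarrow> nat) \<Rightarrow> ('l \<Rightarrow> 'a list \<Rightarrow> bool) \<Rightarrow> ('a \<Rightarrow> 'a \<Rightarrow> bool) \<Rightarrow> 'a set \<Rightarrow> 'a set \<Rightarrow> 'a set set" where
  "binom ar R lt B A = {E. E \<subseteq> B \<and> oiso ar R lt A E}"

text \<open>(S, lt) has order type omega.\<close>
definition enumerated :: "'a set \<Rightarrow> ('a \<Rightarrow> 'a \<Rightarrow> bool) \<Rightarrow> bool" where
  "enumerated S lt \<longleftrightarrow> infinite S \<and>
     (\<forall>x\<in>S. \<not> lt x x) \<and>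
     (\<forall>x\<in>S. \<forall>y\<in>S. \<forall>z\<in>S. lt x y \<and> lt y z \<longrightarrow> lt x z) \<and>
     (\<forall>x\<in>S. \<forall>y\<in>S. x \<noteq> y \<longrightarrow> lt x y \<or> lt y x) \<and>
     (\<forall>x\<in>S. finite {y\<in>S. lt y x})"

text \<open>Fraisse limit: countably infinite and ultrahomogeneous.\<close>
definition fraisse_limit :: "('l \<Rightarrow> nat) \<Rightarrow> ('l \<Rightarrow> 'a list \<Rightarrow> bool) \<Rightarrow> 'a set \<Rightarrow> bool" where
  "fraisse_limit ar R S \<longleftrightarrow> countable S \<and> infinite S \<and>
     (\<forall>A B h. finite A \<and> A \<subseteq> S \<and> B \<subseteq> S \<and> iso_L ar R A B h \<longrightarrow>
        (\<exists>\<sigma>. bij_betw \<sigma> S S \<and> emb ar R S S \<sigma> \<and> (\<forall>x\<in>A. \<sigma> x = h x)))"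

text \<open>Strong amalgamation of the age; every member of the age is isomorphic to
some finite induced substructure S[A] (A possibly empty), so we quantify over those.\<close>
definition strong_amalgamation :: "('l \<Rightarrow> nat) \<Rightarrow> ('l \<Rightarrow> 'a list \<Rightarrow> bool) \<Rightarrow> 'a set \<Rightarrow> bool" where
  "strong_amalgamation ar R S \<longleftrightarrow>
     (\<forall>A B C f g. finite A \<and> A \<subseteq> S \<and> finite B \<and> B \<subseteq> S \<and> finite C \<and> C \<subseteq> S \<and>
        f \<in> Emb ar R A B \<and> g \<in> Emb ar R A C \<longrightarrow>
        (\<exists>D f' g'. finite D \<and> D \<subseteq> S \<and> f' \<in> Emb ar R B D \<and> g' \<in> Emb ar R C D \<and>
           (\<forall>x\<in>A. f' (f x) = g' (g x)) \<and> f' ` B \<inter> g' ` C = f' ` f ` A))"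

definition finite_big_ramsey_degrees :: "('l \<Rightarrow> nat) \<Rightarrow> ('l \<Rightarrow> 'a list \<Rightarrow> bool) \<Rightarrow> 'a set \<Rightarrow> bool" where
  "finite_big_ramsey_degrees ar R S \<longleftrightarrow>
     (\<forall>A. finite A \<and> A \<subseteq> S \<longrightarrow>
       (\<exists>n::nat. \<forall>(k::nat) (\<chi>::('a \<Rightarrow> 'a) \<Rightarrow> nat).
          (\<forall>f\<in>Emb ar R A S. \<chi> f < k) \<longrightarrow>
          (\<exists>w\<in>Emb ar R S S.
             card (\<chi> ` {restrict (w \<circ> f) A | f. f \<in> Emb ar R A S}) \<le> n)))"

text \<open>Natural 1-point extensions: a functor J on Fin(S) (morphisms: L-embeddings),
given by its object part J and morphism part Jm.\<close>
definition natural_1pt_ext :: "('l \<Rightarrow> nat) \<Rightarrow> ('l \<Rightarrow> 'a list \<Rightarrow> bool) \<Rightarrow> 'a set \<Rightarrow> bool" where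
  "natural_1pt_ext ar R S \<longleftrightarrow>
     (\<exists>(J::'a set \<Rightarrow> 'a set) (Jm::'a set \<Rightarrow> 'a set \<Rightarrow> ('a \<Rightarrow> 'a) \<Rightarrow> ('a \<Rightarrow> 'a)).
        (\<forall>A\<in>Fin S. J A \<in> Fin S \<and> A \<subseteq> J A \<and> card (J A - A) = 1) \<and>
        (\<forall>A\<in>Fin S. \<forall>B\<in>Fin S. \<forall>f\<in>Emb ar R A B.
           Jm A B f \<in> Emb ar R (J A) (J B) \<and> (\<forall>x\<in>A. Jm A B f x = f x) \<and>
           (\<forall>x\<in>J A - A. Jm A B f x \<in> J B - B)) \<and>
        (\<forall>A\<in>Fin S. Jm A A (restrict id A) = restrict id (J A)) \<and>
        (\<forall>A\<in>Fin S. \<forall>B\<in>Fin S. \<forall>C\<in>Fin S. \<forall>f\<in>Emb ar R A B. \<forall>g\<in>Emb ar R B C.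
           Jm A C (restrict (g \<circ> f) A) = restrict (Jm B C g \<circ> Jm A B f) (J A)))"

end

theory Submission
  imports Defs
begin

lemma emb_cong:
  assumes "emb ar R X Y f" "\<forall>x\<in>X. f x = g x"
  shows "emb ar R X Y g"
proof -
  have m: "map g xs = map f xs" if "set xs \<subseteq> X" for xs
    using that assms(2) by (induction xs) auto
  show ?thesis unfolding emb_def
  proof (intro conjI allI impI)
    show "inj_on g X" using assms unfolding emb_def by (metis inj_on_cong)
    show "g ` X \<subseteq> Y" using assms unfolding emb_def by auto
    fix l xs assume a: "length xs = ar l \<and> set xs \<subseteq> X"
    then show "R l (map g xs) = R l xs" using m[of xs] assms(1) unfolding emb_def by metis
  qed
qed

lemma emb_sub:
  assumes "emb ar R X Y f" "X' \<subseteq> X" "f ` X' \<subseteq> Y'"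
  shows "emb ar R X' Y' f"
  using assms unfolding emb_def by (auto intro: inj_on_subset)

lemma emb_id: "emb ar R X X id"
  unfolding emb_def by auto

lemma emb_comp:
  assumes "emb ar R X Y f" "emb ar R Y Z g"
  shows "emb ar R X Z (g \<circ> f)"
  unfolding emb_def
proof (intro conjI allI impI)
  show "inj_on (g \<circ> f) X" using assms unfolding emb_def by (auto intro: comp_inj_on inj_on_subset)
  show "(g \<circ> f) ` X \<subseteq> Z" using assms unfolding emb_def by (auto simp: image_subset_iff)
  fix l xs assume a: "length xs = ar l \<and> set xs \<subseteq> X"
  have "set (map f xs) \<subseteq> Y" using a assms(1) unfolding emb_def by auto
  moreover have "length (map f xs) = ar l" using a by simp
  ultimately have "R l (map g (map f xs)) = R l (map f xs)" using assms(2) unfolding emb_def by blast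
  also have "\<dots> = R l xs" using a assms(1) unfolding emb_def by auto
  finally show "R l (map (g \<circ> f) xs) = R l xs" by simp
qed

lemma emb_inv:
  assumes "emb ar R X Y f"
  shows "emb ar R (f ` X) X (inv_into X f)"
  unfolding emb_def
proof (intro conjI allI impI)
  show "inj_on (inv_into X f) (f ` X)" by (rule inj_on_inv_into) simp
  show "inv_into X f ` f ` X \<subseteq> X" by (auto intro: inv_into_into)
  fix l xs assume a: "length xs = ar l \<and> set xs \<subseteq> f ` X"
  define ys where "ys = map (inv_into X f) xs"
  have ys: "set ys \<subseteq> X" "length ys = ar l" using a by (auto simp: ys_def intro: inv_into_into)
  have "map f ys = xs" unfolding ys_def map_map
    by (rule map_idI) (use a in \<open>auto simp: f_inv_into_f\<close>)
  then show "R l (map (inv_into X f) xs) = R l xs"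
    using ys assms unfolding emb_def ys_def[symmetric] by metis
qed

lemma emb_union:
  assumes "\<And>Y. finite Y \<Longrightarrow> Y \<subseteq> S \<Longrightarrow> \<exists>Z. Y \<subseteq> Z \<and> Z \<subseteq> S \<and> emb ar R Z S f"
  shows "emb ar R S S f"
  unfolding emb_def
proof (intro conjI allI impI)
  show "inj_on f S"
  proof (rule inj_onI)
    fix x y assume "x \<in> S" "y \<in> S" "f x = f y"
    then obtain Z where "{x,y} \<subseteq> Z" "emb ar R Z S f" using assms[of "{x,y}"] by auto
    then show "x = y" using \<open>f x = f y\<close> unfolding emb_def inj_on_def by auto
  qed
  show "f ` S \<subseteq> S"
  proof
    fix y assume "y \<in> f ` S"
    then obtain x where "x \<in> S" "y = f x" by auto
    then obtain Z where "{x} \<subseteq> Z" "emb ar R Z S f" using assms[of "{x}"] by auto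
    then show "y \<in> S" using \<open>y = f x\<close> unfolding emb_def by auto
  qed
  fix l xs assume a: "length xs = ar l \<and> set xs \<subseteq> S"
  then obtain Z where "set xs \<subseteq> Z" "emb ar R Z S f" using assms[of "set xs"] by auto
  then show "R l (map f xs) = R l xs" using a unfolding emb_def by auto
qed

lemma key:
  assumes fl: "fraisse_limit ar R S" and sa: "strong_amalgamation ar R S"
    and F: "finite F" "F \<subseteq> S" and x: "x \<in> S" "x \<notin> F" and psi: "emb ar R F S \<psi>"
    and D: "finite D"
  shows "\<exists>u\<in>S. u \<notin> D \<and> emb ar R (insert x F) S (\<psi>(x:=u))"
proof -
  define B where "B = \<psi>`F \<union> (D \<inter> S)"
  define C where "C = insert x F"
  have B: "finite B" "B \<subseteq> S" using F D psi by (auto simp: B_def emb_def)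
  have C: "finite C" "C \<subseteq> S" using F x by (auto simp: C_def)
  have "emb ar R F B \<psi>" using emb_sub[OF psi] by (auto simp: B_def)
  then have f: "restrict \<psi> F \<in> Emb ar R F B"
    unfolding Emb_def by (auto intro: emb_cong)
  have "emb ar R F C id" using emb_sub[OF emb_id, of F F C] by (auto simp: C_def)
  then have g: "restrict id F \<in> Emb ar R F C"
    unfolding Emb_def by (auto intro: emb_cong)
  have "\<exists>D f' g'. finite D \<and> D \<subseteq> S \<and> f' \<in> Emb ar R B D \<and> g' \<in> Emb ar R C D \<and>
           (\<forall>y\<in>F. f' (restrict \<psi> F y) = g' (restrict id F y)) \<and> f' ` B \<inter> g' ` C = f' ` restrict \<psi> F ` F"
  proof -
    have pre: "finite F \<and> F \<subseteq> S \<and> finite B \<and> B \<subseteq> S \<and> finite C \<and> C \<subseteq> S \<and>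
        restrict \<psi> F \<in> Emb ar R F B \<and> restrict id F \<in> Emb ar R F C"
      using F B C f g by simp
    show ?thesis
      by (rule sa[unfolded strong_amalgamation_def, rule_format, OF pre])
  qed
  then obtain D' f' g' where D': "finite D'" "D' \<subseteq> S" and f': "f' \<in> Emb ar R B D'"
    and g': "g' \<in> Emb ar R C D'" and agree: "\<forall>y\<in>F. f' (restrict \<psi> F y) = g' (restrict id F y)"
    and disj: "f' ` B \<inter> g' ` C = f' ` restrict \<psi> F ` F" by (elim exE conjE) (rule that; assumption)
  have f'e: "emb ar R B D' f'" using f' by (simp add: Emb_def)
  have g'e: "emb ar R C D' g'" using g' by (simp add: Emb_def)
  define h where "h = inv_into B f'"
  have injf: "inj_on f' B" using f'e by (simp add: emb_def)
  have "iso_L ar R (f'`B) B h"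
    unfolding iso_L_def h_def using emb_inv[OF f'e] bij_betw_inv_into[of f' B "f'`B"] injf
    by (simp add: bij_betw_def)
  moreover have "f'`B \<subseteq> S" using f'e D' by (auto simp: emb_def)
  ultimately have pre2: "finite (f'`B) \<and> f'`B \<subseteq> S \<and> B \<subseteq> S \<and> iso_L ar R (f'`B) B h"
    using B by simp
  note fl3 = conjunct2[OF conjunct2[OF fl[unfolded fraisse_limit_def]]]
  obtain \<tau> where \<tau>: "bij_betw \<tau> S S" "emb ar R S S \<tau>" "\<forall>y\<in>f'`B. \<tau> y = h y"
    using fl3[rule_format, of "f'`B" B h, OF pre2] by (elim exE conjE) (rule that; assumption)
  define u where "u = \<tau> (g' x)"
  have gx: "g' x \<in> S" using g'e D' by (auto simp: emb_def C_def)
  have uS: "u \<in> S" using \<tau>(1) gx by (auto simp: u_def bij_betw_def)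
  have uB: "u \<notin> B"
  proof
    assume uB: "u \<in> B"
    have "\<tau> (f' u) = u" using \<tau>(3) uB injf by (simp add: h_def)
    moreover have "f' u \<in> S" using uB \<open>f'`B \<subseteq> S\<close> by auto
    ultimately have "f' u = g' x" using \<tau>(1) gx unfolding u_def bij_betw_def inj_on_def by metis
    then have "g' x \<in> f' ` B" using uB by (metis image_eqI)
    moreover have "g' x \<in> g' ` C" by (simp add: C_def)
    ultimately have "g' x \<in> f' ` B \<inter> g' ` C" by (rule IntI)
    then have "g' x \<in> f' ` restrict \<psi> F ` F" by (simp only: disj)
    then obtain y where y: "y \<in> F" "g' x = f' (\<psi> y)" by auto
    then have "g' x = g' y" using agree by auto
    moreover have "inj_on g' C" using g'e by (simp add: emb_def)
    ultimately have "x = y" using y(1) by (auto simp: C_def inj_on_def)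
    then show False using x y by auto
  qed
  have "emb ar R C S (\<tau> \<circ> g')" using emb_comp[OF emb_sub[OF g'e, of C S] \<tau>(2)] g'e D' by (auto simp: emb_def)
  moreover have "\<forall>y\<in>C. (\<tau> \<circ> g') y = (\<psi>(x:=u)) y"
  proof
    fix y assume y: "y \<in> C"
    show "(\<tau> \<circ> g') y = (\<psi>(x:=u)) y"
    proof (cases "y = x")
      case True then show ?thesis by (simp add: u_def)
    next
      case False
      then have yF: "y \<in> F" using y by (auto simp: C_def)
      then have "g' y = f' (\<psi> y)" using agree by auto
      moreover have "\<psi> y \<in> B" using yF by (auto simp: B_def)
      ultimately show ?thesis using \<tau>(3) injf False by (simp add: h_def)
    qed
  qed
  ultimately have "emb ar R C S (\<psi>(x:=u))" by (rule emb_cong)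
  then show ?thesis using uS uB by (auto simp: B_def C_def)
qed


primrec build :: "(nat \<Rightarrow> (nat \<Rightarrow> 'a) \<Rightarrow> 'a) \<Rightarrow> nat \<Rightarrow> nat \<Rightarrow> 'a" where
  "build st 0 = (\<lambda>_. undefined)"
| "build st (Suc n) = (build st n)(n := st n (build st n))"

lemma build_stable: "i < m \<Longrightarrow> build st m i = build st (Suc i) i"
  by (induction m) (auto simp: less_Suc_eq)

lemma construct:
  assumes en: "enumerated S lt" and fl: "fraisse_limit ar R S"
    and sa: "strong_amalgamation ar R S" and w: "emb ar R S S w"
  shows "\<exists>\<phi>. \<phi>`S \<subseteq> w`S \<and> emb ar R S S \<phi> \<and> (\<forall>x\<in>S. \<forall>y\<in>S. lt (\<phi> x) (\<phi> y) \<longleftrightarrow> lt x y)"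
proof -
  note en' = en[unfolded enumerated_def]
  have irr: "\<forall>x\<in>S. \<not> lt x x" using en' by (elim conjE) assumption
  have tr: "\<forall>x\<in>S. \<forall>y\<in>S. \<forall>z\<in>S. lt x y \<and> lt y z \<longrightarrow> lt x z" using en' by (elim conjE) assumption
  have lin: "\<forall>x\<in>S. \<forall>y\<in>S. x \<noteq> y \<longrightarrow> lt x y \<or> lt y x" using en' by (elim conjE) assumption
  have fin: "\<forall>x\<in>S. finite {y\<in>S. lt y x}" using en' by (elim conjE) assumption
  have infS: "infinite S" using en' by (elim conjE) assumption
  have wS: "w`S \<subseteq> S" and winj: "inj_on w S" using w by (auto simp: emb_def)
  define idx where "idx x = card {y\<in>S. lt y x}" for x
  have idx_lt: "idx x < idx y" if "x\<in>S" "y\<in>S" "lt x y" for x y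
  proof -
    have "{z\<in>S. lt z x} \<subset> {z\<in>S. lt z y}" using that tr irr by blast
    then show ?thesis unfolding idx_def using fin that by (simp add: psubset_card_mono)
  qed
  have idx_inj: "inj_on idx S"
  proof (rule inj_onI)
    fix x y assume "x \<in> S" "y \<in> S" "idx x = idx y"
    then show "x = y" using lin idx_lt by (metis less_irrefl)
  qed
  define X where "X n = {s\<in>S. idx s < n}" for n
  have XS: "X n \<subseteq> S" for n by (auto simp: X_def)
  have finX: "finite (X n)" for n
  proof -
    have "idx ` X n \<subseteq> {..<n}" by (auto simp: X_def)
    then have "finite (idx ` X n)" by (rule finite_subset) simp
    then show ?thesis using inj_on_subset[OF idx_inj XS] finite_imageD by blast
  qed
  define Inv where "Inv n g \<longleftrightarrow> (\<forall>i<n. g i \<in> S) \<and> (\<forall>i j. i<j \<and> j<n \<longrightarrow> lt (w (g i)) (w (g j)))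
     \<and> emb ar R (X n) S (\<lambda>s. g (idx s))" for n g
  have step: "\<exists>u. Inv (Suc n) (g(n:=u))" if I: "Inv n g" for n g
  proof -
    define Dset where "Dset = {s\<in>S. \<exists>i<n. \<not> lt (w (g i)) (w s)}"
    define Z where "Z = (\<Union>i<n. insert (w (g i)) {y\<in>S. lt y (w (g i))})"
    have gS: "\<forall>i<n. w (g i) \<in> S" using I wS unfolding Inv_def by auto
    have "finite Z" unfolding Z_def using gS fin by auto
    have "Dset \<subseteq> {s\<in>S. w s \<in> Z}"
    proof
      fix s assume "s \<in> Dset"
      then obtain i where i: "s \<in> S" "i < n" "\<not> lt (w (g i)) (w s)" unfolding Dset_def by auto
      have "w s \<in> S" using i wS by auto
      then have "w s = w (g i) \<or> lt (w s) (w (g i))" using lin gS i by blast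
      then show "s \<in> {s\<in>S. w s \<in> Z}" using i \<open>w s \<in> S\<close> unfolding Z_def by auto
    qed
    moreover have "finite {s\<in>S. w s \<in> Z}"
    proof -
      have "w ` {s\<in>S. w s \<in> Z} \<subseteq> Z" by auto
      then have "finite (w ` {s\<in>S. w s \<in> Z})" using \<open>finite Z\<close> by (rule finite_subset)
      moreover have "inj_on w {s\<in>S. w s \<in> Z}" using winj by (rule inj_on_subset) auto
      ultimately show ?thesis using finite_imageD by blast
    qed
    ultimately have finD: "finite Dset" by (rule finite_subset)
    have good: "(\<forall>i<Suc n. (g(n:=u)) i \<in> S) \<and> (\<forall>i j. i<j \<and> j<Suc n \<longrightarrow> lt (w ((g(n:=u)) i)) (w ((g(n:=u)) j)))"
      if u: "u \<in> S" "u \<notin> Dset" for u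
    proof (intro conjI allI impI)
      fix i assume "i < Suc n" then show "(g(n:=u)) i \<in> S" using I u unfolding Inv_def by (auto simp: less_Suc_eq)
    next
      fix i j assume ij: "i < j \<and> j < Suc n"
      show "lt (w ((g(n:=u)) i)) (w ((g(n:=u)) j))"
      proof (cases "j = n")
        case True
        then show ?thesis using ij u unfolding Dset_def by auto
      next
        case False
        then show ?thesis using ij I unfolding Inv_def by auto
      qed
    qed
    show ?thesis
    proof (cases "\<exists>x\<in>S. idx x = n")
      case True
      then obtain x where x: "x \<in> S" "idx x = n" by auto
      have XSuc: "X (Suc n) = insert x (X n)"
        using x idx_inj unfolding X_def inj_on_def by (auto simp: less_Suc_eq)
      have xX: "x \<notin> X n" using x by (auto simp: X_def)
      have "emb ar R (X n) S (\<lambda>s. g (idx s))" using I unfolding Inv_def by auto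
      from key[OF fl sa finX XS x(1) xX this finD]
      obtain u where u: "u \<in> S" "u \<notin> Dset" "emb ar R (insert x (X n)) S ((\<lambda>s. g (idx s))(x:=u))" by blast
      have "emb ar R (X (Suc n)) S (\<lambda>s. (g(n:=u)) (idx s))"
        unfolding XSuc using u(3) by (rule emb_cong) (auto simp: X_def x)
      then show ?thesis using good[OF u(1,2)] unfolding Inv_def by blast
    next
      case False
      then have XSuc: "X (Suc n) = X n" unfolding X_def by (auto simp: less_Suc_eq)
      obtain u where u: "u \<in> S" "u \<notin> Dset" using infS finD
        by (metis Diff_iff Diff_infinite_finite finite.emptyI ex_in_conv)
      have "emb ar R (X n) S (\<lambda>s. g (idx s))" using I unfolding Inv_def by auto
      then have "emb ar R (X (Suc n)) S (\<lambda>s. (g(n:=u)) (idx s))"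
        unfolding XSuc by (rule emb_cong) (auto simp: X_def)
      then show ?thesis using good[OF u(1,2)] unfolding Inv_def by blast
    qed
  qed
  define st where "st n g = (SOME u. Inv (Suc n) (g(n:=u)))" for n g
  define G where "G = build st"
  have inv: "Inv n (G n)" for n
  proof (induction n)
    case 0
    have "X 0 = {}" by (auto simp: X_def)
    then show ?case unfolding Inv_def emb_def by auto
  next
    case (Suc n)
    have "G (Suc n) = (G n)(n := st n (G n))" by (simp add: G_def)
    then show ?case unfolding st_def by (simp only:) (rule someI_ex[OF step[OF Suc]])
  qed
  define q where "q i = G (Suc i) i" for i
  have Gq: "G m i = q i" if "i < m" for i m using build_stable[OF that] by (simp add: q_def G_def)
  have qS: "q i \<in> S" for i using inv[of "Suc i"] unfolding Inv_def q_def by auto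
  define \<psi> where "\<psi> s = q (idx s)" for s
  have emb\<psi>: "emb ar R S S \<psi>"
  proof (rule emb_union)
    fix Y assume Y: "finite Y" "Y \<subseteq> S"
    obtain N where N: "idx ` Y \<subseteq> {..<N}" using finite_nat_bounded[OF finite_imageI[OF Y(1)]] by blast
    have "Y \<subseteq> X N" using N Y by (auto simp: X_def)
    moreover have "emb ar R (X N) S \<psi>"
      using inv[of N] unfolding Inv_def by (auto intro: emb_cong simp: \<psi>_def X_def Gq)
    ultimately show "\<exists>Z. Y \<subseteq> Z \<and> Z \<subseteq> S \<and> emb ar R Z S \<psi>" using XS by blast
  qed
  define \<phi> where "\<phi> = w \<circ> \<psi>"
  have emb\<phi>: "emb ar R S S \<phi>" unfolding \<phi>_def by (rule emb_comp[OF emb\<psi> w])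
  have img: "\<phi>`S \<subseteq> w`S" using qS by (auto simp: \<phi>_def \<psi>_def)
  have \<phi>S: "\<phi> x \<in> S" if "x \<in> S" for x using img wS that by auto
  have fwd: "lt (\<phi> x) (\<phi> y)" if "x \<in> S" "y \<in> S" "lt x y" for x y
  proof -
    have "idx x < idx y" using idx_lt that by auto
    then have "lt (w (G (Suc (idx y)) (idx x))) (w (G (Suc (idx y)) (idx y)))"
      using inv[of "Suc (idx y)"] unfolding Inv_def by auto
    then show ?thesis using \<open>idx x < idx y\<close> by (simp add: Gq \<phi>_def \<psi>_def)
  qed
  have "\<forall>x\<in>S. \<forall>y\<in>S. lt (\<phi> x) (\<phi> y) \<longleftrightarrow> lt x y"
  proof (intro ballI iffI)
    fix x y assume xy: "x \<in> S" "y \<in> S" "lt (\<phi> x) (\<phi> y)"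
    show "lt x y"
    proof (rule ccontr)
      assume "\<not> lt x y"
      then have "x = y \<or> lt y x" using lin xy by blast
      then show False
      proof
        assume "x = y" then show False using xy irr \<phi>S by blast
      next
        assume "lt y x"
        then have "lt (\<phi> y) (\<phi> x)" using fwd xy by blast
        then show False using xy irr tr \<phi>S by blast
      qed
    qed
  next
    fix x y assume "x \<in> S" "y \<in> S" "lt x y" then show "lt (\<phi> x) (\<phi> y)" by (rule fwd)
  qed
  then show ?thesis using img emb\<phi> by blast
qed

theorem corollary6p8:
  fixes ar :: "'l \<Rightarrow> nat" and R :: "'l \<Rightarrow> 'a list \<Rightarrow> bool"
    and lt :: "'a \<Rightarrow> 'a \<Rightarrow> bool" and S :: "'a set"
  assumes "enumerated S lt"
    and "fraisse_limit ar R S"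
    and "finite_big_ramsey_degrees ar R S"
    and "strong_amalgamation ar R S"
    and "natural_1pt_ext ar R S"
  shows "\<forall>A\<in>Fin S. \<exists>n::nat. \<forall>(k::nat) (\<gamma>::'a set \<Rightarrow> 'a set \<Rightarrow> nat).
           (\<forall>B\<in>Fin S. \<forall>E\<in>binom ar R lt B A. \<gamma> B E < k) \<longrightarrow>
           (\<exists>S' c. S' \<subseteq> S \<and> oiso ar R lt S S' \<and>
              (\<forall>E\<in>binom ar R lt S' A. c E \<in> Fin S \<and> E \<subseteq> c E) \<and>
              card {\<gamma> (c E) E | E. E \<in> binom ar R lt S' A} \<le> n)"
proof (intro ballI)
  fix A assume A: "A \<in> Fin S"
  then have Afin: "finite A" "A \<subseteq> S" "A \<noteq> {}" by (auto simp: Fin_def)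
  from assms(3) Afin obtain n where n: "\<forall>(k::nat) (\<chi>::('a \<Rightarrow> 'a) \<Rightarrow> nat). (\<forall>f\<in>Emb ar R A S. \<chi> f < k) \<longrightarrow>
          (\<exists>w\<in>Emb ar R S S. card (\<chi> ` {restrict (w \<circ> f) A | f. f \<in> Emb ar R A S}) \<le> n)"
    unfolding finite_big_ramsey_degrees_def by blast
  show "\<exists>n::nat. \<forall>(k::nat) (\<gamma>::'a set \<Rightarrow> 'a set \<Rightarrow> nat).
           (\<forall>B\<in>Fin S. \<forall>E\<in>binom ar R lt B A. \<gamma> B E < k) \<longrightarrow>
           (\<exists>S' c. S' \<subseteq> S \<and> oiso ar R lt S S' \<and>
              (\<forall>E\<in>binom ar R lt S' A. c E \<in> Fin S \<and> E \<subseteq> c E) \<and>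
              card {\<gamma> (c E) E | E. E \<in> binom ar R lt S' A} \<le> n)"
  proof (intro exI[of _ n] allI impI)
    fix k :: nat and \<gamma> :: "'a set \<Rightarrow> 'a set \<Rightarrow> nat"
    assume hk: "\<forall>B\<in>Fin S. \<forall>E\<in>binom ar R lt B A. \<gamma> B E < k"
    define \<chi> where "\<chi> h = (if oemb ar R lt A S h then \<gamma> (h`A) (h`A) else 0)" for h
    have ob: "h`A \<in> binom ar R lt (h`A) A \<and> h`A \<in> Fin S" if h: "oemb ar R lt A S h" for h
    proof
      have he: "emb ar R A S h" using h by (simp add: oemb_def)
      have "bij_betw h A (h`A)" using he by (simp add: emb_def bij_betw_def)
      moreover have "oemb ar R lt A (h`A) h" using h emb_sub[OF he, of A "h`A"] by (simp add: oemb_def)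
      ultimately show "h`A \<in> binom ar R lt (h`A) A" unfolding binom_def oiso_def by blast
      show "h`A \<in> Fin S" using Afin he by (auto simp: Fin_def emb_def)
    qed
    have chib: "\<chi> f < Suc k" for f
    proof (cases "oemb ar R lt A S f")
      case True
      then show ?thesis using ob[OF True] hk by (simp add: \<chi>_def less_Suc_eq)
    qed (simp add: \<chi>_def)
    then have "\<forall>f\<in>Emb ar R A S. \<chi> f < Suc k" by blast
    then obtain w where w: "w \<in> Emb ar R S S"
      and card: "card (\<chi> ` {restrict (w \<circ> f) A | f. f \<in> Emb ar R A S}) \<le> n" using n by blast
    have we: "emb ar R S S w" using w by (simp add: Emb_def)
    obtain \<phi> where \<phi>: "\<phi>`S \<subseteq> w`S" "emb ar R S S \<phi>" "\<forall>x\<in>S. \<forall>y\<in>S. lt (\<phi> x) (\<phi> y) \<longleftrightarrow> lt x y"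
      using construct[OF assms(1) assms(2) assms(4) we] by blast
    define S' where "S' = \<phi>`S"
    have S'S: "S' \<subseteq> S" using \<phi>(2) by (auto simp: S'_def emb_def)
    show "\<exists>S' c. S' \<subseteq> S \<and> oiso ar R lt S S' \<and>
              (\<forall>E\<in>binom ar R lt S' A. c E \<in> Fin S \<and> E \<subseteq> c E) \<and>
              card {\<gamma> (c E) E | E. E \<in> binom ar R lt S' A} \<le> n"
    proof (intro exI[of _ S'] exI[of _ "\<lambda>E. E"] conjI)
      show "S' \<subseteq> S" by (rule S'S)
      have "bij_betw \<phi> S S'" using \<phi>(2) by (simp add: S'_def emb_def bij_betw_def)
      moreover have "oemb ar R lt S S' \<phi>"
        using \<phi>(3) emb_sub[OF \<phi>(2), of S S'] by (simp add: oemb_def S'_def)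
      ultimately show "oiso ar R lt S S'" unfolding oiso_def by blast
      show "\<forall>E\<in>binom ar R lt S' A. E \<in> Fin S \<and> E \<subseteq> E"
      proof
        fix E assume "E \<in> binom ar R lt S' A"
        then obtain g where "E \<subseteq> S'" "bij_betw g A E" unfolding binom_def oiso_def by blast
        then show "E \<in> Fin S \<and> E \<subseteq> E" using Afin S'S
          by (auto simp: Fin_def bij_betw_def)
      qed
      have sub: "{\<gamma> E E | E. E \<in> binom ar R lt S' A} \<subseteq> \<chi> ` {restrict (w \<circ> f) A | f. f \<in> Emb ar R A S}"
      proof
        fix c assume "c \<in> {\<gamma> E E | E. E \<in> binom ar R lt S' A}"
        then obtain E where c: "c = \<gamma> E E" and E: "E \<in> binom ar R lt S' A" by blast
        then obtain g where ES: "E \<subseteq> S'" and gb: "bij_betw g A E" and go: "oemb ar R lt A E g"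
          unfolding binom_def oiso_def by blast
        have ge: "emb ar R A E g" using go by (simp add: oemb_def)
        have gA: "g`A = E" using gb by (simp add: bij_betw_def)
        have gw: "g`A \<subseteq> w`S" using gA ES \<phi>(1) by (auto simp: S'_def)
        define f where "f = restrict (inv_into S w \<circ> g) A"
        have "emb ar R A S (inv_into S w \<circ> g)"
          using emb_comp[OF emb_sub[OF ge, of A "w`S"] emb_inv[OF we]] gw by simp
        then have fE: "f \<in> Emb ar R A S" unfolding Emb_def f_def
          by (auto intro: emb_cong)
        have eq: "restrict (w \<circ> f) A = restrict g A"
          unfolding f_def using gw by (intro ext) (auto simp: image_subset_iff f_inv_into_f)
        have "emb ar R A S g" using emb_sub[OF ge, of A S] ES S'S gA by auto
        then have "emb ar R A S (restrict g A)" by (rule emb_cong) simp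
        then have "oemb ar R lt A S (restrict g A)"
          using go unfolding oemb_def by simp
        moreover have "restrict g A ` A = E" using gA by auto
        ultimately have "\<chi> (restrict (w \<circ> f) A) = c" using eq by (simp add: \<chi>_def c)
        then show "c \<in> \<chi> ` {restrict (w \<circ> f) A | f. f \<in> Emb ar R A S}" using fE by blast
      qed
      have "\<chi> ` {restrict (w \<circ> f) A | f. f \<in> Emb ar R A S} \<subseteq> {..<Suc k}"
        using chib by auto
      then have "finite (\<chi> ` {restrict (w \<circ> f) A | f. f \<in> Emb ar R A S})" by (rule finite_subset) simp
      then show "card {\<gamma> E E | E. E \<in> binom ar R lt S' A} \<le> n"
        using card_mono[OF _ sub] card by linarith
    qed
  qed
qed

end
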